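(* Let the data graph $d$ be modeled as a power-law random (PR) graph, in which a vertex has degree $w$ with probability $\mathrm{p}_w$ and, given degrees $w_i$ and $w_j$ of two vertices, an edge between them exists with probability $w_i w_j \rho$. Let $p$ be a pattern graph with vertex set $V(p)=\{v_1,\dots,v_k\}$, and let $\mathbf{ord}$ be a partial order on $V(p)$ used for symmetry breaking. Consider a uniformly random injective assignment $f:V(p)\to V(d)$, and call $f$ valid if (MC$_1$) for every mapping $v\mapsto u$ in $f$, $deg(v)\le deg(u)$, where $deg(v)$ is the degree of $v$ in $p$ and $deg(u)$ the degree of $u$ in $d$, and (MC$_2$) for every edge $(v_i,v_j)\in E(p)$, $(f(v_i),f(v_j))\in E(d)$. Then the probability that $f$ is valid is $$\epsilon=\rho^{|E(p)|}\cdot\prod_{v_i\in V(p)}\sum_{w=deg(v_i)}^{\infty} w^{deg(v_i)}\,\mathrm{p}_w,$$ and the expected number of matches of $p$ in $d$ is $$\mathrm{E}(|M(p,d)|)=\frac{|V(d)|!}{(|V(d)|-|V(p)|)!}\cdot\epsilon\cdot\frac{|Auto(p,\mathbf{ord})|}{|Auto(p,\emptyset)|},$$ where $Auto(p,\mathbf{ord})$ denotes the set of automorphisms of $p$ satisfying $\mathbf{ord}$ and $Auto(p,\emptyset)$ the set of all automorphisms of $p$.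
   Context: Data graph $d$ is modeled as a PR (power-law random) graph with degree distribution $\mathrm{p}_w$ and edge probability $w_i w_j\rho$ between vertices of degrees $w_i,w_j$; $M(p,d)$ is the set of matches (subgraph isomorphisms respecting the symmetry-breaking partial order $\mathbf{ord}$) of pattern $p$ in $d$. *)

theory Defs
  imports "HOL-Probability.Probability"
begin

text \<open>Vertices of the pattern p are 0..<k (standing for v_1..v_k); its edges are
  a set Ep of 2-element vertex sets. Vertices of the data graph d are 0..<n.\<close>

definition doubletons :: "nat \<Rightarrow> nat set set" where
  "doubletons m = {e. \<exists>a b. a \<noteq> b \<and> a < m \<and> b < m \<and> e = {a, b}}"

definition simple_graph :: "nat \<Rightarrow> nat set set \<Rightarrow> bool" where
  "simple_graph k Ep \<longleftrightarrow> Ep \<subseteq> doubletons k"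

definition pdeg :: "nat set set \<Rightarrow> nat \<Rightarrow> nat" where
  "pdeg Ep v = card {e \<in> Ep. v \<in> e}"

definition strict_po_on :: "nat \<Rightarrow> (nat \<times> nat) set \<Rightarrow> bool" where
  "strict_po_on k ord \<longleftrightarrow> ord \<subseteq> {0..<k} \<times> {0..<k} \<and> irrefl ord \<and> trans ord"

definition sat_ord :: "(nat \<times> nat) set \<Rightarrow> (nat \<Rightarrow> nat) \<Rightarrow> bool" where
  "sat_ord ord g \<longleftrightarrow> (\<forall>(a, b) \<in> ord. g a < g b)"

definition Auto :: "nat \<Rightarrow> nat set set \<Rightarrow> (nat \<Rightarrow> nat) set" where
  "Auto k Ep = {\<sigma> \<in> {0..<k} \<rightarrow>\<^sub>E {0..<k}. bij_betw \<sigma> {0..<k} {0..<k} \<and>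
      (\<forall>a<k. \<forall>b<k. {a, b} \<in> Ep \<longleftrightarrow> {\<sigma> a, \<sigma> b} \<in> Ep)}"

text \<open>Automorphisms satisfying ord: Auto(p, ord).  Auto(p, {}) = Auto k Ep.\<close>
definition Auto_ord :: "nat \<Rightarrow> nat set set \<Rightarrow> (nat \<times> nat) set \<Rightarrow> (nat \<Rightarrow> nat) set" where
  "Auto_ord k Ep ord = {\<sigma> \<in> Auto k Ep. sat_ord ord \<sigma>}"

text \<open>ord is used for symmetry breaking: in every automorphism orbit {g o s | s in Aut}
  of an injective labelling g of the pattern vertices, the number of members
  satisfying ord is the same (namely |Auto(p,ord)|).  This covers ord = {} and
  the usual "exactly one representative per orbit" symmetry-breaking orders.\<close>
definition symmetry_breaking :: "nat \<Rightarrow> nat set set \<Rightarrow> (nat \<times> nat) set \<Rightarrow> bool" where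
  "symmetry_breaking k Ep ord \<longleftrightarrow> strict_po_on k ord \<and>
     (\<forall>g. inj_on g {0..<k} \<longrightarrow>
        card {\<sigma> \<in> Auto k Ep. sat_ord ord (g \<circ> \<sigma>)} = card (Auto_ord k Ep ord))"

text \<open>A data graph is a pair (W, B) with B the edge indicator.\<close>
definition PR_graph :: "nat \<Rightarrow> nat pmf \<Rightarrow> real \<Rightarrow> ((nat \<Rightarrow> nat) \<times> (nat set \<Rightarrow> bool)) pmf" where
  "PR_graph n P \<rho> =
     do { W \<leftarrow> Pi_pmf {0..<n} 0 (\<lambda>_. P);
          B \<leftarrow> Pi_pmf (doubletons n) False (\<lambda>e. bernoulli_pmf (\<rho> * (\<Prod>u\<in>e. real (W u))));
          return_pmf (W, B) }"

definition assignments :: "nat \<Rightarrow> nat \<Rightarrow> (nat \<Rightarrow> nat) set" where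
  "assignments k n = {f \<in> {0..<k} \<rightarrow>\<^sub>E {0..<n}. inj_on f {0..<k}}"

text \<open>Validity: MC1 (deg_p v \<le> deg_d (f v), where the degree of a data vertex is its
  PR-model degree W) and MC2 (edges are preserved).\<close>
definition valid :: "nat \<Rightarrow> nat set set \<Rightarrow> (nat \<Rightarrow> nat) \<Rightarrow> (nat \<Rightarrow> nat) \<Rightarrow> (nat set \<Rightarrow> bool) \<Rightarrow> bool" where
  "valid k Ep f W B \<longleftrightarrow> (\<forall>v<k. pdeg Ep v \<le> W (f v)) \<and> (\<forall>e\<in>Ep. B (f ` e))"

definition matches :: "nat \<Rightarrow> nat \<Rightarrow> nat set set \<Rightarrow> (nat \<times> nat) set \<Rightarrow> (nat \<Rightarrow> nat) \<Rightarrow> (nat set \<Rightarrow> bool) \<Rightarrow> (nat \<Rightarrow> nat) set" where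
  "matches k n Ep ord W B = {f \<in> assignments k n. valid k Ep f W B \<and> sat_ord ord f}"

end

theory Submission
  imports Defs
begin


lemma finite_doubletons: "finite (doubletons m)"
proof -
  have "doubletons m \<subseteq> Pow {0..<m}" by (auto simp: doubletons_def)
  then show ?thesis by (rule finite_subset) auto
qed

lemma prod_edges:
  assumes "Ep \<subseteq> doubletons k"
  shows "(\<Prod>e\<in>Ep. \<Prod>a\<in>e. (x a :: real)) = (\<Prod>v<k. x v ^ pdeg Ep v)"
proof -
  have fin: "finite Ep" using assms finite_doubletons finite_subset by blast
  have sub: "\<And>e. e \<in> Ep \<Longrightarrow> e \<subseteq> {..<k}" using assms by (auto simp: doubletons_def)
  have "(\<Prod>e\<in>Ep. \<Prod>a\<in>e. x a) = (\<Prod>e\<in>Ep. \<Prod>a<k. (if a \<in> e then x a else 1))"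
  proof (rule prod.cong[OF refl])
    fix e assume "e \<in> Ep"
    then have "{a\<in>{..<k}. a \<in> e} = e" using sub by auto
    then show "(\<Prod>a\<in>e. x a) = (\<Prod>a<k. (if a \<in> e then x a else 1))"
      using prod.inter_filter[of "{..<k}" x "\<lambda>a. a \<in> e"] by simp
  qed
  also have "\<dots> = (\<Prod>a<k. \<Prod>e\<in>Ep. (if a \<in> e then x a else 1))"
    by (rule prod.swap)
  also have "\<dots> = (\<Prod>v<k. x v ^ pdeg Ep v)"
  proof (rule prod.cong[OF refl])
    fix v
    have "(\<Prod>e\<in>Ep. (if v \<in> e then x v else 1)) = (\<Prod>e\<in>{e\<in>Ep. v \<in> e}. x v)"
      using prod.inter_filter[of Ep "\<lambda>_. x v" "\<lambda>e. v \<in> e", OF fin] by simp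
    then show "(\<Prod>e\<in>Ep. (if v \<in> e then x v else 1)) = x v ^ pdeg Ep v"
      by (simp add: pdeg_def)
  qed
  finally show ?thesis .
qed

lemma card_assignments:
  assumes "k \<le> n"
  shows "real (card (assignments k n)) = fact n / fact (n - k)"
proof -
  have "card (assignments k n) = (\<Prod>i\<in>{0..<k}. n - i)"
    unfolding assignments_def using card_inj_on_subset_funcset[of "{0..<k}" "{0..<n}" "{0..<k}"] by simp
  moreover have "real (\<Prod>i\<in>{0..<k}. n - i) = fact n / fact (n - k)" using assms
  proof (induction k)
    case 0 then show ?case by simp
  next
    case (Suc k)
    then have IH: "real (\<Prod>i\<in>{0..<k}. n - i) = fact n / fact (n - k)" by simp
    have "n - k = Suc (n - Suc k)" using Suc.prems by simp
    then have f: "(fact (n - k) :: real) = real (n - k) * fact (n - Suc k)"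
      by (metis fact_Suc of_nat_Suc)
    have "real (\<Prod>i\<in>{0..<Suc k}. n - i) = real (\<Prod>i\<in>{0..<k}. n - i) * real (n - k)" by simp
    also have "\<dots> = fact n / fact (n - Suc k)" using IH f Suc.prems by (simp add: field_simps)
    finally show ?case .
  qed
  ultimately show ?thesis by simp
qed



lemma id_Auto: "restrict id {0..<k} \<in> Auto k Ep"
  unfolding Auto_def by (auto simp: bij_betw_def inj_on_def)

lemma finite_Auto: "finite (Auto k Ep)"
  by (rule finite_subset[of _ "{0..<k} \<rightarrow>\<^sub>E {0..<k}"]) (auto simp: Auto_def intro: finite_PiE)

lemma finite_assignments: "finite (assignments k n)"
  by (rule finite_subset[of _ "{0..<k} \<rightarrow>\<^sub>E {0..<n}"]) (auto simp: assignments_def intro: finite_PiE)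

lemma sat_restrict:
  assumes "ord \<subseteq> {0..<k} \<times> {0..<k}"
  shows "sat_ord ord (restrict g {0..<k}) = sat_ord ord g"
  using assms unfolding sat_ord_def by (force simp: restrict_def)

lemma card_shift:
  assumes "\<sigma> \<in> Auto k Ep" and ordk: "ord \<subseteq> {0..<k} \<times> {0..<k}"
  shows "card {g \<in> assignments k n. sat_ord ord (g \<circ> \<sigma>)} = card {h \<in> assignments k n. sat_ord ord h}"
proof -
  have bij: "bij_betw \<sigma> {0..<k} {0..<k}" and sext: "\<sigma> \<in> {0..<k} \<rightarrow>\<^sub>E {0..<k}"
    using assms unfolding Auto_def by auto
  define \<tau> where "\<tau> = inv_into {0..<k} \<sigma>"
  have t1: "\<And>x. x \<in> {0..<k} \<Longrightarrow> \<sigma> (\<tau> x) = x" unfolding \<tau>_def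
    using bij by (simp add: bij_betw_inv_into_right)
  have t2: "\<And>x. x \<in> {0..<k} \<Longrightarrow> \<tau> (\<sigma> x) = x" unfolding \<tau>_def
    using bij by (simp add: bij_betw_inv_into_left)
  have t3: "\<And>x. x \<in> {0..<k} \<Longrightarrow> \<tau> x \<in> {0..<k}" unfolding \<tau>_def
    using bij by (metis bij_betw_def inv_into_into)
  have s3: "\<And>x. x \<in> {0..<k} \<Longrightarrow> \<sigma> x \<in> {0..<k}" using sext by auto
  have "bij_betw (\<lambda>g. restrict (g \<circ> \<sigma>) {0..<k}) {g \<in> assignments k n. sat_ord ord (g \<circ> \<sigma>)}
           {h \<in> assignments k n. sat_ord ord h}"
  proof (rule bij_betw_byWitness[where f' = "\<lambda>h. restrict (h \<circ> \<tau>) {0..<k}"])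
    show "\<forall>a\<in>{g \<in> assignments k n. sat_ord ord (g \<circ> \<sigma>)}. restrict (restrict (a \<circ> \<sigma>) {0..<k} \<circ> \<tau>) {0..<k} = a"
    proof (rule ballI)
      fix a assume a: "a \<in> {g \<in> assignments k n. sat_ord ord (g \<circ> \<sigma>)}"
      show "restrict (restrict (a \<circ> \<sigma>) {0..<k} \<circ> \<tau>) {0..<k} = a"
      proof (rule ext)
      fix x
      show "restrict (restrict (a \<circ> \<sigma>) {0..<k} \<circ> \<tau>) {0..<k} x = a x"
      proof (cases "x \<in> {0..<k}")
        case True then show ?thesis using t1 t3 by simp
      next
        case False then show ?thesis using a by (simp add: assignments_def PiE_def extensional_def)
      qed
      qed
    qed
    show "\<forall>a'\<in>{h \<in> assignments k n. sat_ord ord h}. restrict (restrict (a' \<circ> \<tau>) {0..<k} \<circ> \<sigma>) {0..<k} = a'"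
    proof (rule ballI)
      fix a assume a: "a \<in> {h \<in> assignments k n. sat_ord ord h}"
      show "restrict (restrict (a \<circ> \<tau>) {0..<k} \<circ> \<sigma>) {0..<k} = a"
      proof (rule ext)
      fix x
      show "restrict (restrict (a \<circ> \<tau>) {0..<k} \<circ> \<sigma>) {0..<k} x = a x"
      proof (cases "x \<in> {0..<k}")
        case True then show ?thesis using t2 s3 by simp
      next
        case False then show ?thesis using a by (simp add: assignments_def PiE_def extensional_def)
      qed
      qed
    qed
    show "(\<lambda>g. restrict (g \<circ> \<sigma>) {0..<k}) ` {g \<in> assignments k n. sat_ord ord (g \<circ> \<sigma>)}
          \<subseteq> {h \<in> assignments k n. sat_ord ord h}"
    proof safe
      fix g assume g: "g \<in> assignments k n" "sat_ord ord (g \<circ> \<sigma>)"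
      show "sat_ord ord (restrict (g \<circ> \<sigma>) {0..<k})" using g sat_restrict[OF ordk] by simp
      have "inj_on (g \<circ> \<sigma>) {0..<k}" using g bij unfolding assignments_def
        by (intro comp_inj_on) (auto simp: bij_betw_def)
      then show "restrict (g \<circ> \<sigma>) {0..<k} \<in> assignments k n"
      proof -
        have "restrict (g \<circ> \<sigma>) {0..<k} \<in> {0..<k} \<rightarrow>\<^sub>E {0..<n}"
          unfolding restrict_PiE_iff
        proof
          fix i assume "i \<in> {0..<k}"
          then have "\<sigma> i \<in> {0..<k}" by (rule s3)
          then show "(g \<circ> \<sigma>) i \<in> {0..<n}" using g(1) unfolding assignments_def by auto
        qed
        then show ?thesis unfolding assignments_def using \<open>inj_on (g \<circ> \<sigma>) {0..<k}\<close> by simp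
      qed
    qed
    show "(\<lambda>h. restrict (h \<circ> \<tau>) {0..<k}) ` {h \<in> assignments k n. sat_ord ord h}
          \<subseteq> {g \<in> assignments k n. sat_ord ord (g \<circ> \<sigma>)}"
    proof safe
      fix h assume h: "h \<in> assignments k n" "sat_ord ord h"
      have e: "restrict (restrict (h \<circ> \<tau>) {0..<k} \<circ> \<sigma>) {0..<k} = h"
      proof (rule ext)
        fix x show "restrict (restrict (h \<circ> \<tau>) {0..<k} \<circ> \<sigma>) {0..<k} x = h x"
        proof (cases "x \<in> {0..<k}")
          case True then show ?thesis using t2 s3 by simp
        next
          case False then show ?thesis using h by (simp add: assignments_def PiE_def extensional_def)
        qed
      qed
      show "sat_ord ord (restrict (h \<circ> \<tau>) {0..<k} \<circ> \<sigma>)"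
        using h sat_restrict[OF ordk, of "restrict (h \<circ> \<tau>) {0..<k} \<circ> \<sigma>"] e by simp
      have "inj_on \<tau> {0..<k}" using t1 by (metis inj_on_inverseI)
      then have "inj_on (h \<circ> \<tau>) {0..<k}" using h t3 unfolding assignments_def
        by (intro comp_inj_on) (auto intro: inj_on_subset)
      then show "restrict (h \<circ> \<tau>) {0..<k} \<in> assignments k n"
      proof -
        have "restrict (h \<circ> \<tau>) {0..<k} \<in> {0..<k} \<rightarrow>\<^sub>E {0..<n}"
          unfolding restrict_PiE_iff
        proof
          fix i assume "i \<in> {0..<k}"
          then have "\<tau> i \<in> {0..<k}" by (rule t3)
          then show "(h \<circ> \<tau>) i \<in> {0..<n}" using h(1) unfolding assignments_def by auto
        qed
        then show ?thesis unfolding assignments_def using \<open>inj_on (h \<circ> \<tau>) {0..<k}\<close> by simp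
      qed
    qed
  qed
  then show ?thesis by (rule bij_betw_same_card)
qed

lemma card_filter_sum: "finite A \<Longrightarrow> card {x\<in>A. P x} = (\<Sum>x\<in>A. if P x then 1 else 0)"
  by (simp add: sum.inter_filter[symmetric])

lemma count_sat:
  assumes "symmetry_breaking k Ep ord"
  shows "card {f \<in> assignments k n. sat_ord ord f} * card (Auto k Ep)
       = card (assignments k n) * card (Auto_ord k Ep ord)"
proof -
  have ordk: "ord \<subseteq> {0..<k} \<times> {0..<k}" using assms by (simp add: symmetry_breaking_def strict_po_on_def)
  let ?A = "assignments k n" and ?G = "Auto k Ep"
  have "card ?A * card (Auto_ord k Ep ord) = (\<Sum>g\<in>?A. card {\<sigma> \<in> ?G. sat_ord ord (g \<circ> \<sigma>)})"
    using assms unfolding symmetry_breaking_def assignments_def by simp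
  also have "\<dots> = (\<Sum>g\<in>?A. \<Sum>\<sigma>\<in>?G. if sat_ord ord (g \<circ> \<sigma>) then 1 else 0)"
    using finite_Auto by (simp add: card_filter_sum)
  also have "\<dots> = (\<Sum>\<sigma>\<in>?G. \<Sum>g\<in>?A. if sat_ord ord (g \<circ> \<sigma>) then 1 else 0)"
    by (rule sum.swap)
  also have "\<dots> = (\<Sum>\<sigma>\<in>?G. card {g \<in> ?A. sat_ord ord (g \<circ> \<sigma>)})"
    using finite_assignments by (simp add: card_filter_sum)
  also have "\<dots> = (\<Sum>\<sigma>\<in>?G. card {h \<in> ?A. sat_ord ord h})"
    using card_shift[OF _ ordk] by simp
  finally show ?thesis by simp
qed



definition Bpmf :: "nat \<Rightarrow> real \<Rightarrow> (nat \<Rightarrow> nat) \<Rightarrow> (nat set \<Rightarrow> bool) pmf" where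
  "Bpmf n \<rho> W = Pi_pmf (doubletons n) False (\<lambda>e. bernoulli_pmf (\<rho> * (\<Prod>u\<in>e. real (W u))))"

lemma PR_graph_alt: "PR_graph n P \<rho> = bind_pmf (Pi_pmf {0..<n} 0 (\<lambda>_. P)) (\<lambda>W. map_pmf (Pair W) (Bpmf n \<rho> W))"
  by (simp add: PR_graph_def map_pmf_def Bpmf_def)

lemma edge_prob:
  fixes W :: "nat \<Rightarrow> nat"
  assumes Epk: "Ep \<subseteq> doubletons k" and f: "f \<in> assignments k n"
    and Wsup: "\<forall>u<n. W u \<in> set_pmf P" and rho: "\<rho> \<ge> 0"
    and bnd: "\<forall>w1\<in>set_pmf P. \<forall>w2\<in>set_pmf P. \<rho> * real w1 * real w2 \<le> 1"
  shows "measure_pmf.prob (Bpmf n \<rho> W) {B. \<forall>e\<in>Ep. B (f ` e)} = (\<Prod>e\<in>Ep. \<rho> * (\<Prod>a\<in>e. real (W (f a))))"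
proof -
  define D where "D = doubletons n"
  define q where "q = (\<lambda>e. \<rho> * (\<Prod>u\<in>e. real (W u)))"
  define F where "F = (\<lambda>e. f ` e) ` Ep"
  have finj: "inj_on f {0..<k}" and fr: "\<And>a. a < k \<Longrightarrow> f a < n"
    using f by (auto simp: assignments_def)
  have esub: "\<And>e. e \<in> Ep \<Longrightarrow> e \<subseteq> {0..<k}" using Epk by (auto simp: doubletons_def)
  have FD: "F \<subseteq> D"
  proof
    fix d assume "d \<in> F"
    then obtain e where e: "e \<in> Ep" "d = f ` e" unfolding F_def by auto
    then obtain a b where ab: "a \<noteq> b" "a < k" "b < k" "e = {a, b}" using Epk by (auto simp: doubletons_def)
    then have "f a \<noteq> f b" using finj by (auto simp: inj_on_def)
    then show "d \<in> D" using ab e fr unfolding D_def doubletons_def by auto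
  qed
  have qF: "\<And>d. d \<in> F \<Longrightarrow> 0 \<le> q d \<and> q d \<le> 1"
  proof -
    fix d assume "d \<in> F"
    then obtain e where e: "e \<in> Ep" "d = f ` e" unfolding F_def by auto
    then obtain a b where ab: "a \<noteq> b" "a < k" "b < k" "e = {a, b}" using Epk by (auto simp: doubletons_def)
    then have ne: "f a \<noteq> f b" using finj by (auto simp: inj_on_def)
    have q: "q d = \<rho> * real (W (f a)) * real (W (f b))" using ab e ne by (simp add: q_def)
    have "W (f a) \<in> set_pmf P" "W (f b) \<in> set_pmf P" using Wsup fr ab by auto
    then show "0 \<le> q d \<and> q d \<le> 1" using q bnd rho by auto
  qed
  have seteq: "{B. \<forall>e\<in>Ep. B (f ` e)} = Pi D (\<lambda>d. if d \<in> F then {True} else UNIV)"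
    using FD unfolding F_def by (auto simp: Pi_def)
  have "measure_pmf.prob (Bpmf n \<rho> W) {B. \<forall>e\<in>Ep. B (f ` e)}
      = (\<Prod>d\<in>D. measure_pmf.prob (bernoulli_pmf (q d)) (if d \<in> F then {True} else UNIV))"
    unfolding seteq Bpmf_def D_def q_def by (rule measure_Pi_pmf_Pi) (rule finite_doubletons)
  also have "\<dots> = (\<Prod>d\<in>D. if d \<in> F then q d else 1)"
    by (rule prod.cong[OF refl]) (use qF in \<open>auto simp: measure_pmf_single\<close>)
  also have "\<dots> = (\<Prod>d\<in>{d\<in>D. d \<in> F}. q d)"
    using prod.inter_filter[of D q "\<lambda>d. d \<in> F"] finite_doubletons D_def by simp
  also have "{d\<in>D. d \<in> F} = F" using FD by auto
  also have "(\<Prod>d\<in>F. q d) = (\<Prod>e\<in>Ep. q (f ` e))"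
    unfolding F_def
  proof (rule prod.reindex[unfolded comp_def])
    show "inj_on ((`) f) Ep"
      using esub finj by (auto simp: inj_on_def inj_on_image_eq_iff)
  qed
  also have "\<dots> = (\<Prod>e\<in>Ep. \<rho> * (\<Prod>a\<in>e. real (W (f a))))"
  proof (rule prod.cong[OF refl])
    fix e assume "e \<in> Ep"
    then have "inj_on f e" using esub finj inj_on_subset by blast
    then show "q (f ` e) = \<rho> * (\<Prod>a\<in>e. real (W (f a)))"
      unfolding q_def by (simp add: prod.reindex)
  qed
  finally show ?thesis .
qed


definition gfun :: "nat set set \<Rightarrow> nat \<Rightarrow> nat \<Rightarrow> real" where
  "gfun Ep v w = (if pdeg Ep v \<le> w then real w ^ pdeg Ep v else 0)"

lemma valid_prob_W:
  fixes W :: "nat \<Rightarrow> nat"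
  assumes Epk: "Ep \<subseteq> doubletons k" and f: "f \<in> assignments k n"
    and Wsup: "\<forall>u<n. W u \<in> set_pmf P" and rho: "\<rho> \<ge> 0"
    and bnd: "\<forall>w1\<in>set_pmf P. \<forall>w2\<in>set_pmf P. \<rho> * real w1 * real w2 \<le> 1"
  shows "measure_pmf.prob (Bpmf n \<rho> W) {B. valid k Ep f W B} = \<rho> ^ card Ep * (\<Prod>v<k. gfun Ep v (W (f v)))"
proof (cases "\<forall>v<k. pdeg Ep v \<le> W (f v)")
  case True
  then have "{B. valid k Ep f W B} = {B. \<forall>e\<in>Ep. B (f ` e)}" by (auto simp: valid_def)
  then have "measure_pmf.prob (Bpmf n \<rho> W) {B. valid k Ep f W B} = (\<Prod>e\<in>Ep. \<rho> * (\<Prod>a\<in>e. real (W (f a))))"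
    using edge_prob[OF assms] by simp
  also have "\<dots> = \<rho> ^ card Ep * (\<Prod>e\<in>Ep. \<Prod>a\<in>e. real (W (f a)))"
    by (simp add: prod.distrib)
  also have "\<dots> = \<rho> ^ card Ep * (\<Prod>v<k. real (W (f v)) ^ pdeg Ep v)"
    using prod_edges[OF Epk, of "\<lambda>a. real (W (f a))"] by simp
  also have "\<dots> = \<rho> ^ card Ep * (\<Prod>v<k. gfun Ep v (W (f v)))"
    using True by (simp add: gfun_def)
  finally show ?thesis .
next
  case False
  then obtain v where v: "v < k" "\<not> pdeg Ep v \<le> W (f v)" by auto
  then have "{B. valid k Ep f W B} = {}" by (auto simp: valid_def)
  moreover have "(\<Prod>v<k. gfun Ep v (W (f v))) = 0"
    using v by (intro prod_zero) (auto simp: gfun_def)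
  ultimately show ?thesis by simp
qed

lemma prod_reindex_image:
  assumes "inj_on f K" "f ` K \<subseteq> U" "finite U"
  shows "(\<Prod>u\<in>U. if u \<in> f ` K then G (inv_into K f u) else (1::'b::comm_monoid_mult)) = (\<Prod>v\<in>K. G v)"
proof -
  have "(\<Prod>u\<in>U. if u \<in> f ` K then G (inv_into K f u) else 1) = (\<Prod>u\<in>{u\<in>U. u \<in> f ` K}. G (inv_into K f u))"
    using prod.inter_filter[of U "\<lambda>u. G (inv_into K f u)" "\<lambda>u. u \<in> f ` K"] assms by simp
  also have "{u\<in>U. u \<in> f ` K} = f ` K" using assms by auto
  also have "(\<Prod>u\<in>f ` K. G (inv_into K f u)) = (\<Prod>v\<in>K. G (inv_into K f (f v)))"
    using assms by (simp add: prod.reindex)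
  also have "\<dots> = (\<Prod>v\<in>K. G v)" using assms by (intro prod.cong) auto
  finally show ?thesis .
qed

lemma nn_prod_assign:
  fixes G :: "nat \<Rightarrow> nat \<Rightarrow> ennreal"
  assumes f: "f \<in> assignments k n"
  shows "(\<integral>\<^sup>+W. (\<Prod>v<k. G v (W (f v))) \<partial>Pi_pmf {0..<n} 0 (\<lambda>_. P)) = (\<Prod>v<k. \<integral>\<^sup>+w. G v w \<partial>P)"
proof -
  have finj: "inj_on f {..<k}" and fr: "f ` {..<k} \<subseteq> {0..<n}"
    using f by (auto simp: assignments_def atLeast0LessThan)
  define H where "H = (\<lambda>u. if u \<in> f ` {..<k} then G (inv_into {..<k} f u) else (\<lambda>_. 1))"
  have "\<And>W. (\<Prod>v<k. G v (W (f v))) = (\<Prod>u\<in>{0..<n}. H u (W u))"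
  proof -
    fix W :: "nat \<Rightarrow> nat"
    have "(\<Prod>u\<in>{0..<n}. H u (W u)) = (\<Prod>u\<in>{0..<n}. if u \<in> f ` {..<k} then G (inv_into {..<k} f u) (W (f (inv_into {..<k} f u))) else 1)"
      unfolding H_def by (intro prod.cong) (auto simp: f_inv_into_f)
    also have "\<dots> = (\<Prod>v<k. G v (W (f v)))"
      using prod_reindex_image[OF finj fr, of "\<lambda>v. G v (W (f v))"] by simp
    finally show "(\<Prod>v<k. G v (W (f v))) = (\<Prod>u\<in>{0..<n}. H u (W u))" by simp
  qed
  then have "(\<integral>\<^sup>+W. (\<Prod>v<k. G v (W (f v))) \<partial>Pi_pmf {0..<n} 0 (\<lambda>_. P))
      = (\<integral>\<^sup>+W. (\<Prod>u\<in>{0..<n}. H u (W u)) \<partial>Pi_pmf {0..<n} 0 (\<lambda>_. P))" by simp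
  also have "\<dots> = (\<Prod>u\<in>{0..<n}. \<integral>\<^sup>+w. H u w \<partial>P)"
    by (rule nn_integral_prod_Pi_pmf) simp
  also have "\<dots> = (\<Prod>u\<in>{0..<n}. if u \<in> f ` {..<k} then (\<integral>\<^sup>+w. G (inv_into {..<k} f u) w \<partial>P) else 1)"
    unfolding H_def by (intro prod.cong) (auto simp: emeasure_pmf)
  also have "\<dots> = (\<Prod>v<k. \<integral>\<^sup>+w. G v w \<partial>P)"
    using prod_reindex_image[OF finj fr, of "\<lambda>v. \<integral>\<^sup>+w. G v w \<partial>P"] by simp
  finally show ?thesis .
qed


lemma summable_g:
  assumes rho: "\<rho> \<ge> 0" and bnd: "\<forall>w1\<in>set_pmf P. \<forall>w2\<in>set_pmf P. \<rho> * real w1 * real w2 \<le> 1"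
    and c: "\<rho> ^ card Ep \<noteq> 0" and finE: "finite Ep"
  shows "summable (\<lambda>w. if pdeg Ep v \<le> w then real w ^ pdeg Ep v * pmf P w else 0)"
proof (cases "\<rho> > 0")
  case True
  define M where "M = max 1 (nat \<lceil>1 / \<rho>\<rceil>)"
  show ?thesis
  proof (rule summable_finite[of "{..M}"])
    fix w assume "w \<notin> {..M}"
    then have wM: "w > M" by simp
    have "w \<notin> set_pmf P"
    proof
      assume w: "w \<in> set_pmf P"
      have "\<rho> * real w * real w \<le> 1" using bnd w by auto
      moreover have "real w \<ge> 1" using wM M_def by simp
      ultimately have "\<rho> * real w \<le> 1"
        using True by (smt (verit, best) mult_le_cancel_left1 mult_nonneg_nonneg)
      then have "real w \<le> 1 / \<rho>" using True by (simp add: field_simps)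
      then have "real w \<le> real (nat \<lceil>1 / \<rho>\<rceil>)" by linarith
      then show False using wM M_def by simp
    qed
    then show "(if pdeg Ep v \<le> w then real w ^ pdeg Ep v * pmf P w else 0) = 0"
      by (simp add: set_pmf_eq)
  qed simp
next
  case False
  then have "Ep = {}" using c rho finE by (cases "card Ep = 0") auto
  then have "(\<lambda>w. if pdeg Ep v \<le> w then real w ^ pdeg Ep v * pmf P w else 0) = pmf P"
    by (simp add: pdeg_def)
  moreover have "summable (pmf P)"
  proof (rule summableI_nonneg_bounded)
    fix m show "sum (pmf P) {..<m} \<le> 1"
      using measure_measure_pmf_finite[of "{..<m}" P] measure_pmf.prob_le_1[of P "{..<m}"] by simp
  qed simp
  ultimately show ?thesis by simp
qed



lemma nn_g:
  assumes "summable (\<lambda>w. if pdeg Ep v \<le> w then real w ^ pdeg Ep v * pmf P w else 0)"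
  shows "(\<integral>\<^sup>+w. ennreal (gfun Ep v w) \<partial>P) = ennreal (\<Sum>w. if pdeg Ep v \<le> w then real w ^ pdeg Ep v * pmf P w else 0)"
proof -
  have "(\<integral>\<^sup>+w. ennreal (gfun Ep v w) \<partial>P) = (\<integral>\<^sup>+w. ennreal (pmf P w) * ennreal (gfun Ep v w) \<partial>count_space UNIV)"
    by (rule nn_integral_measure_pmf)
  also have "\<dots> = (\<Sum>w. ennreal (pmf P w) * ennreal (gfun Ep v w))"
    by (rule nn_integral_count_space_nat)
  also have "\<dots> = (\<Sum>w. ennreal (if pdeg Ep v \<le> w then real w ^ pdeg Ep v * pmf P w else 0))"
    by (intro suminf_cong) (auto simp: gfun_def ennreal_mult' mult.commute)
  also have "\<dots> = ennreal (\<Sum>w. if pdeg Ep v \<le> w then real w ^ pdeg Ep v * pmf P w else 0)"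
    using assms by (intro suminf_ennreal2) auto
  finally show ?thesis .
qed

lemma prob_valid_f:
  assumes sg: "simple_graph k Ep" and f: "f \<in> assignments k n" and rho: "\<rho> \<ge> 0"
    and bnd: "\<forall>w1\<in>set_pmf P. \<forall>w2\<in>set_pmf P. \<rho> * real w1 * real w2 \<le> 1"
  shows "measure_pmf.prob (PR_graph n P \<rho>) {(W, B). valid k Ep f W B}
       = \<rho> ^ card Ep * (\<Prod>v<k. \<Sum>w. (if pdeg Ep v \<le> w then real w ^ pdeg Ep v * pmf P w else 0))"
proof -
  have Epk: "Ep \<subseteq> doubletons k" using sg by (simp add: simple_graph_def)
  have finE: "finite Ep" using Epk finite_doubletons finite_subset by blast
  define c where "c = \<rho> ^ card Ep"
  have c0: "c \<ge> 0" using rho by (simp add: c_def)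
  define WP where "WP = Pi_pmf {0..<n} 0 (\<lambda>_. P)"
  have g0: "\<And>v w. gfun Ep v w \<ge> 0" by (simp add: gfun_def)
  have "emeasure (measure_pmf (PR_graph n P \<rho>)) {(W, B). valid k Ep f W B}
      = (\<integral>\<^sup>+W. emeasure (measure_pmf (Bpmf n \<rho> W)) {B. valid k Ep f W B} \<partial>WP)"
    unfolding PR_graph_alt WP_def by (simp add: vimage_def)
  also have "\<dots> = (\<integral>\<^sup>+W. ennreal c * (\<Prod>v<k. ennreal (gfun Ep v (W (f v)))) \<partial>WP)"
  proof (rule nn_integral_cong_AE, rule AE_pmfI)
    fix W assume "W \<in> set_pmf WP"
    then have Wsup: "\<forall>u<n. W u \<in> set_pmf P" unfolding WP_def
      by (subst (asm) set_Pi_pmf) (auto simp: PiE_dflt_def)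
    show "emeasure (measure_pmf (Bpmf n \<rho> W)) {B. valid k Ep f W B}
        = ennreal c * (\<Prod>v<k. ennreal (gfun Ep v (W (f v))))"
      using valid_prob_W[OF Epk f Wsup rho bnd] c0 g0
      by (simp add: measure_pmf.emeasure_eq_measure c_def ennreal_mult' prod_ennreal prod_nonneg)
  qed
  also have "\<dots> = ennreal c * (\<integral>\<^sup>+W. (\<Prod>v<k. ennreal (gfun Ep v (W (f v)))) \<partial>WP)"
    by (rule nn_integral_cmult) simp
  also have "\<dots> = ennreal c * (\<Prod>v<k. \<integral>\<^sup>+w. ennreal (gfun Ep v w) \<partial>P)"
    unfolding WP_def by (subst nn_prod_assign[OF f]) (rule refl)
  also have "\<dots> = ennreal (c * (\<Prod>v<k. \<Sum>w. (if pdeg Ep v \<le> w then real w ^ pdeg Ep v * pmf P w else 0)))"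
  proof (cases "c = 0")
    case True then show ?thesis by simp
  next
    case False
    have sm: "\<And>v. summable (\<lambda>w. if pdeg Ep v \<le> w then real w ^ pdeg Ep v * pmf P w else 0)"
      using summable_g[OF rho bnd _ finE] False c_def by blast
    have nn: "\<And>v. (\<Sum>w. if pdeg Ep v \<le> w then real w ^ pdeg Ep v * pmf P w else 0) \<ge> 0"
      using sm by (intro suminf_nonneg) auto
    show ?thesis using nn_g[OF sm] nn c0
      by (simp add: ennreal_mult' prod_ennreal prod_nonneg)
  qed
  finally have "emeasure (measure_pmf (PR_graph n P \<rho>)) {(W, B). valid k Ep f W B}
      = ennreal (c * (\<Prod>v<k. \<Sum>w. (if pdeg Ep v \<le> w then real w ^ pdeg Ep v * pmf P w else 0)))" .
  moreover have "c * (\<Prod>v<k. \<Sum>w. (if pdeg Ep v \<le> w then real w ^ pdeg Ep v * pmf P w else 0)) \<ge> 0"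
  proof (cases "c = 0")
    case False
    have sm: "\<And>v. summable (\<lambda>w. if pdeg Ep v \<le> w then real w ^ pdeg Ep v * pmf P w else 0)"
      using summable_g[OF rho bnd _ finE] False c_def by blast
    have nn: "\<And>v. (\<Sum>w. if pdeg Ep v \<le> w then real w ^ pdeg Ep v * pmf P w else 0) \<ge> 0"
      using sm by (intro suminf_nonneg) auto
    then show ?thesis using c0 by (simp add: prod_nonneg)
  qed simp
  ultimately show ?thesis
    by (simp add: measure_pmf.emeasure_eq_measure c_def)
qed



theorem mainTheorem5:
  fixes k n :: nat and Ep :: "nat set set" and ord :: "(nat \<times> nat) set"
    and P :: "nat pmf" and \<rho> :: real
  assumes "simple_graph k Ep"
    and "symmetry_breaking k Ep ord"
    and "k \<le> n"
    and "\<rho> \<ge> 0"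
    and "\<forall>w1\<in>set_pmf P. \<forall>w2\<in>set_pmf P. \<rho> * real w1 * real w2 \<le> 1"
  defines "\<epsilon> \<equiv> \<rho> ^ card Ep *
      (\<Prod>v<k. \<Sum>w. (if pdeg Ep v \<le> w then real w ^ pdeg Ep v * pmf P w else 0))"
  shows "measure_pmf.prob (pair_pmf (pmf_of_set (assignments k n)) (PR_graph n P \<rho>))
           {(f, W, B). valid k Ep f W B} = \<epsilon>
    \<and> measure_pmf.expectation (PR_graph n P \<rho>)
           (\<lambda>(W, B). real (card (matches k n Ep ord W B)))
         = fact n / fact (n - k) * \<epsilon> * real (card (Auto_ord k Ep ord)) / real (card (Auto k Ep))"
proof -
  let ?A = "assignments k n"
  let ?G = "PR_graph n P \<rho>"
  have pf: "\<And>f. f \<in> ?A \<Longrightarrow> measure_pmf.prob ?G {(W, B). valid k Ep f W B} = \<epsilon>"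
    unfolding \<epsilon>_def using prob_valid_f assms(1,4,5) by blast
  have e0: "\<epsilon> \<ge> 0"
  proof -
    have "restrict id {0..<k} \<in> ?A" using assms(3) by (auto simp: assignments_def)
    from pf[OF this] show ?thesis by (metis measure_nonneg)
  qed
  have Ane: "?A \<noteq> {}" using assms(3) by (auto simp: assignments_def intro!: exI[of _ "restrict id {0..<k}"])
  have part1: "measure_pmf.prob (pair_pmf (pmf_of_set ?A) ?G) {(f, W, B). valid k Ep f W B} = \<epsilon>"
  proof -
    have "emeasure (measure_pmf (pair_pmf (pmf_of_set ?A) ?G)) {(f, W, B). valid k Ep f W B}
        = (\<integral>\<^sup>+f. emeasure (measure_pmf ?G) {(W, B). valid k Ep f W B} \<partial>pmf_of_set ?A)"
      unfolding pair_pmf_def by (simp add: map_pmf_def[symmetric] vimage_def)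
    also have "\<dots> = (\<integral>\<^sup>+f. ennreal \<epsilon> \<partial>pmf_of_set ?A)"
      by (rule nn_integral_cong_AE, rule AE_pmfI)
         (use Ane finite_assignments pf in \<open>auto simp: measure_pmf.emeasure_eq_measure\<close>)
    also have "\<dots> = ennreal \<epsilon>" by (simp add: measure_pmf.emeasure_space_1)
    finally show ?thesis using e0 by (simp add: measure_pmf.emeasure_eq_measure)
  qed
  let ?S = "{f \<in> ?A. sat_ord ord f}"
  have finS: "finite ?S" using finite_assignments by simp
  have "measure_pmf.expectation ?G (\<lambda>(W, B). real (card (matches k n Ep ord W B)))
      = measure_pmf.expectation ?G (\<lambda>x. \<Sum>f\<in>?S. indicator {(W, B). valid k Ep f W B} x)"
  proof (rule Bochner_Integration.integral_cong[OF refl])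
    fix x :: "(nat \<Rightarrow> nat) \<times> (nat set \<Rightarrow> bool)"
    obtain W B where x: "x = (W, B)" by (cases x)
    have m: "matches k n Ep ord W B = {f \<in> ?S. valid k Ep f W B}" by (auto simp: matches_def)
    have c: "card {f \<in> ?S. valid k Ep f W B} = (\<Sum>f\<in>?S. if valid k Ep f W B then 1 else 0)"
      by (rule card_filter_sum[OF finS])
    show "(case x of (W, B) \<Rightarrow> real (card (matches k n Ep ord W B)))
        = (\<Sum>f\<in>?S. indicator {(W, B). valid k Ep f W B} x)"
      unfolding x case_prod_conv m c of_nat_sum by (intro sum.cong) (auto simp: indicator_def)
  qed
  also have "\<dots> = (\<Sum>f\<in>?S. measure_pmf.expectation ?G (indicator {(W, B). valid k Ep f W B}))"
    by (rule Bochner_Integration.integral_sum) (rule measure_pmf.integrable_const_bound[where B=1]; simp)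
  also have "\<dots> = (\<Sum>f\<in>?S. \<epsilon>)"
    by (rule sum.cong[OF refl]) (use pf in auto)
  also have "\<dots> = real (card ?S) * \<epsilon>" by simp
  also have "\<dots> = fact n / fact (n - k) * \<epsilon> * real (card (Auto_ord k Ep ord)) / real (card (Auto k Ep))"
  proof -
    have cA: "card (Auto k Ep) > 0"
      using id_Auto finite_Auto card_gt_0_iff by blast
    have "real (card ?S) * real (card (Auto k Ep)) = real (card ?A) * real (card (Auto_ord k Ep ord))"
      using count_sat[OF assms(2), of n] by (metis of_nat_mult)
    then have "real (card ?S) = real (card ?A) * real (card (Auto_ord k Ep ord)) / real (card (Auto k Ep))"
      using cA by (simp add: field_simps)
    then show ?thesis using card_assignments[OF assms(3)] by simp
  qed
  finally show ?thesis using part1 by simp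
qed


end
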